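(* Let $N\ge 1$, $1< p<\infty$ and $0<s<1$ be such that $s\,p>N$. Let $\mu$ be a compactly supported finite (signed) Radon measure on $\mathbb{R}^N$ with support $K$, and let $U\in \mathcal{W}^{s,p}(\mathbb{R}^N)$ satisfy \[ \iint_{\mathbb{R}^N\times\mathbb{R}^N} \frac{J_p(U(x)-U(y))\,(\varphi(x)-\varphi(y))}{|x-y|^{N+s\,p}}\,dx\,dy=\int_{\mathbb{R}^N}\varphi\,d\mu,\quad \mbox{ for every } \varphi\in \mathcal{W}^{s,p}(\mathbb{R}^N). \] Then $U \in L^\infty(\mathbb{R}^N)$ and for every $z\in\mathbb{R}^N$, \[ \|U-U(z)\|_{L^\infty(\mathbb{R}^N)}=\max_{K} |U-U(z)|. \]
   Context: $J_p(t)=|t|^{p-2}t$. $[\varphi]_{W^{s,p}(\mathbb{R}^N)}=\left(\iint_{\mathbb{R}^N\times\mathbb{R}^N}\frac{|\varphi(x)-\varphi(y)|^p}{|x-y|^{N+s\,p}}dx\,dy\right)^{1/p}$; $[\varphi]_{C^{0,\alpha}(\mathbb{R}^N)}=\sup_{x\ne y}\frac{|\varphi(x)-\varphi(y)|}{|x-y|^\alpha}$; $\alpha_{s,p}=s-N/p$. $\mathcal{W}^{s,p}(\mathbb{R}^N)$ is the set of continuous functions with finite $[\cdot]_{C^{0,\alpha_{s,p}}(\mathbb{R}^N)}$ and finite $[\cdot]_{W^{s,p}(\mathbb{R}^N)}$. *)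

theory Defs
  imports "HOL-Analysis.Analysis" "HOL-Probability.Essential_Supremum"
begin

definition Jp :: "real \<Rightarrow> real \<Rightarrow> real" where
  "Jp p t = \<bar>t\<bar> powr (p - 2) * t"

definition alpha_sp :: "real \<Rightarrow> real \<Rightarrow> nat \<Rightarrow> real" where
  "alpha_sp s p N = s - real N / p"

definition gagliardo_p :: "real \<Rightarrow> real \<Rightarrow> ('a::euclidean_space \<Rightarrow> real) \<Rightarrow> ennreal" where
  "gagliardo_p s p \<phi> =
     (\<integral>\<^sup>+ xy. ennreal (\<bar>\<phi> (fst xy) - \<phi> (snd xy)\<bar> powr p /
                      dist (fst xy) (snd xy) powr (real DIM('a) + s * p)) \<partial>(lborel :: ('a \<times> 'a) measure))"

definition holder_finite :: "real \<Rightarrow> ('a::metric_space \<Rightarrow> real) \<Rightarrow> bool" where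
  "holder_finite \<alpha> \<phi> \<longleftrightarrow> (\<exists>C. \<forall>x y. x \<noteq> y \<longrightarrow> \<bar>\<phi> x - \<phi> y\<bar> / dist x y powr \<alpha> \<le> C)"

definition Wsp :: "real \<Rightarrow> real \<Rightarrow> ('a::euclidean_space \<Rightarrow> real) set" where
  "Wsp s p = {\<phi>. continuous_on UNIV \<phi> \<and> holder_finite (alpha_sp s p DIM('a)) \<phi>
                  \<and> gagliardo_p s p \<phi> < \<infinity>}"

text \<open>Support of the signed measure M1 - M2 (i.e. support of its total variation,
  when M1, M2 are the mutually singular Jordan parts).\<close>
definition signed_support :: "'a::metric_space measure \<Rightarrow> 'a measure \<Rightarrow> 'a set" where
  "signed_support M1 M2 = {x. \<forall>e>0. emeasure M1 (ball x e) + emeasure M2 (ball x e) \<noteq> 0}"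

end

theory Submission
  imports Defs
begin

lemma ptw_aux:
  fixes p u t :: real
  assumes p: "1 < p" and tu: "t * u \<ge> 0" and le: "\<bar>t\<bar> \<le> \<bar>u\<bar>"
  shows "\<bar>t\<bar> powr p \<le> Jp p u * t \<and> Jp p u * t \<le> \<bar>u\<bar> powr p"
proof (cases "u = 0")
  case True
  then have "t = 0" using le by simp
  then show ?thesis using True by (simp add: Jp_def)
next
  case False
  have ut: "u * t = \<bar>u\<bar> * \<bar>t\<bar>" using tu by (metis abs_mult abs_of_nonneg mult.commute)
  have pw: "\<bar>x\<bar> powr (q + 1) = \<bar>x\<bar> powr q * \<bar>x\<bar>" if "x \<noteq> 0" for x q :: real
    using that by (simp add: powr_add)
  have e1: "\<bar>u\<bar> powr (p - 2) * \<bar>u\<bar> = \<bar>u\<bar> powr (p - 1)"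
    using pw[OF False, of "p - 2"] by simp
  have e2: "\<bar>u\<bar> powr (p - 1) * \<bar>u\<bar> = \<bar>u\<bar> powr p"
    using pw[OF False, of "p - 1"] by simp
  have J: "Jp p u * t = \<bar>u\<bar> powr (p - 1) * \<bar>t\<bar>"
    unfolding Jp_def using ut e1 by (metis mult.assoc)
  have A: "\<bar>t\<bar> powr p \<le> \<bar>u\<bar> powr (p - 1) * \<bar>t\<bar>"
  proof (cases "t = 0")
    case True then show ?thesis by simp
  next
    case False
    have "\<bar>t\<bar> powr p = \<bar>t\<bar> powr (p - 1) * \<bar>t\<bar>"
      using pw[OF False, of "p - 1"] by simp
    also have "\<dots> \<le> \<bar>u\<bar> powr (p - 1) * \<bar>t\<bar>"
      using p le by (intro mult_right_mono powr_mono2) auto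
    finally show ?thesis .
  qed
  have B: "\<bar>u\<bar> powr (p - 1) * \<bar>t\<bar> \<le> \<bar>u\<bar> powr p"
    using e2 le by (metis mult_left_mono powr_ge_zero)
  show ?thesis using A B J by simp
qed

lemma meas_test:
  fixes U :: "'a::euclidean_space \<Rightarrow> real"
  assumes "continuous_on UNIV U" "continuous_on UNIV V"
  shows "(\<lambda>xy::'a\<times>'a. Jp p (U (fst xy) - U (snd xy)) * (V (fst xy) - V (snd xy)) /
     dist (fst xy) (snd xy) powr (real DIM('a) + s * p)) \<in> borel_measurable lborel"
proof -
  have [measurable]: "(\<lambda>xy::'a\<times>'a. U (fst xy)) \<in> borel_measurable borel"
    "(\<lambda>xy::'a\<times>'a. U (snd xy)) \<in> borel_measurable borel"
    "(\<lambda>xy::'a\<times>'a. V (fst xy)) \<in> borel_measurable borel"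
    "(\<lambda>xy::'a\<times>'a. V (snd xy)) \<in> borel_measurable borel"
    "(\<lambda>xy::'a\<times>'a. dist (fst xy) (snd xy)) \<in> borel_measurable borel"
    by (intro borel_measurable_continuous_onI continuous_intros continuous_on_compose2[OF assms(1)]
        continuous_on_compose2[OF assms(2)]; simp)+
  show ?thesis unfolding Jp_def by simp measurable
qed

lemma ball_pos: "0 < r \<Longrightarrow> 0 < emeasure lborel (ball (c::'a::euclidean_space) r)"
  using content_ball_pos[of r c] by (auto simp: measure_def zero_less_iff_neq_zero)

lemma support_AE:
  fixes M1 M2 :: "'a::euclidean_space measure"
  assumes sets: "sets M1 = sets borel"
  shows "AE x in M1. x \<in> signed_support M1 M2"
proof -
  define F where "F = {ball x e | x e. e > 0 \<and> emeasure M1 (ball x e) = 0}"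
  have sub: "UNIV - signed_support M1 M2 \<subseteq> \<Union>F"
  proof
    fix x assume "x \<in> UNIV - signed_support M1 M2"
    then obtain e where e: "e > 0" "emeasure M1 (ball x e) + emeasure M2 (ball x e) = 0"
      by (auto simp: signed_support_def)
    then have "emeasure M1 (ball x e) = 0" by simp
    then show "x \<in> \<Union>F" using e unfolding F_def by force
  qed
  obtain F' where F': "F' \<subseteq> F" "countable F'" "\<Union>F' = \<Union>F"
    using Lindelof[of F] unfolding F_def by auto
  have "(\<Union>S\<in>F'. S) \<in> null_sets M1"
  proof (rule null_sets_UN'[OF F'(2)])
    fix S assume "S \<in> F'"
    then obtain x e where "S = ball x e" "emeasure M1 (ball x e) = 0"
      using F'(1) unfolding F_def by auto
    then show "S \<in> null_sets M1" using sets by (auto intro: null_setsI)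
  qed
  then show ?thesis
    by (rule AE_I') (use sub F' in auto)
qed

lemma key:
  fixes s p :: real and U :: "'a::euclidean_space \<Rightarrow> real"
    and M1 M2 :: "'a measure" and K :: "'a set" and \<psi> :: "real \<Rightarrow> real"
  assumes p: "1 < p" and s0: "0 < s"
    and UW: "U \<in> Wsp s p"
    and EL: "\<forall>\<phi>\<in>Wsp s p.
           (\<integral>xy. Jp p (U (fst xy) - U (snd xy)) * (\<phi> (fst xy) - \<phi> (snd xy)) /
                  dist (fst xy) (snd xy) powr (real DIM('a) + s * p) \<partial>(lborel :: ('a \<times> 'a) measure))
           = (\<integral>x. \<phi> x \<partial>M1) - (\<integral>x. \<phi> x \<partial>M2)"
    and AE1: "AE x in M1. x \<in> K" and AE2: "AE x in M2. x \<in> K"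
    and Kne: "K \<noteq> {}"
    and mono: "mono \<psi>" and lip: "\<And>a b. \<bar>\<psi> a - \<psi> b\<bar> \<le> \<bar>a - b\<bar>"
    and zero: "\<And>k. k \<in> K \<Longrightarrow> \<psi> (U k) = 0"
  shows "\<psi> (U x0) = 0"
proof (rule ccontr)
  assume nz: "\<psi> (U x0) \<noteq> 0"
  define \<phi> where "\<phi> = (\<lambda>x. \<psi> (U x))"
  define D where "D = (\<lambda>xy::'a\<times>'a. dist (fst xy) (snd xy) powr (real DIM('a) + s * p))"
  have Dnn: "D xy \<ge> 0" for xy by (simp add: D_def)
  from UW have Ucont: "continuous_on UNIV U"
    and Uhol: "holder_finite (alpha_sp s p DIM('a)) U" and Ugag: "gagliardo_p s p U < \<infinity>"
    by (auto simp: Wsp_def)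
  have psicont: "continuous_on UNIV \<psi>"
    by (rule lipschitz_on_continuous_on[of 1]) (auto intro!: lipschitz_onI simp: dist_real_def lip)
  have phicont: "continuous_on UNIV \<phi>"
    unfolding \<phi>_def by (rule continuous_on_compose2[OF psicont Ucont]) auto
  have phidiff: "\<bar>\<phi> a - \<phi> b\<bar> \<le> \<bar>U a - U b\<bar>" for a b unfolding \<phi>_def by (rule lip)
  have phisign: "(\<phi> a - \<phi> b) * (U a - U b) \<ge> 0" for a b
  proof (cases "U a \<le> U b")
    case True
    have "\<psi> (U a) \<le> \<psi> (U b)" using monoD[OF mono True] .
    then have "\<phi> a - \<phi> b \<le> 0" "U a - U b \<le> 0" using True unfolding \<phi>_def by linarith+
    then show ?thesis by (rule mult_nonpos_nonpos)
  next
    case False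
    then have F: "U b \<le> U a" by linarith
    have "\<psi> (U b) \<le> \<psi> (U a)" using monoD[OF mono F] .
    then have "\<phi> a - \<phi> b \<ge> 0" "U a - U b \<ge> 0" using F unfolding \<phi>_def by linarith+
    then show ?thesis by (rule mult_nonneg_nonneg)
  qed
  have phiW: "\<phi> \<in> Wsp s p"
  proof -
    from Uhol obtain C where C: "\<forall>x y. x \<noteq> y \<longrightarrow>
        \<bar>U x - U y\<bar> / dist x y powr (alpha_sp s p DIM('a)) \<le> C"
      by (auto simp: holder_finite_def)
    have "holder_finite (alpha_sp s p DIM('a)) \<phi>" unfolding holder_finite_def
      apply (rule exI[of _ C]) using C phidiff by (meson divide_right_mono order_trans powr_ge_zero)
    moreover have "gagliardo_p s p \<phi> \<le> gagliardo_p s p U"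
      unfolding gagliardo_p_def
      by (intro nn_integral_mono ennreal_leI divide_right_mono powr_mono2) (use p phidiff in auto)
    ultimately show ?thesis using phicont Ugag by (auto simp: Wsp_def)
  qed
  define f where "f = (\<lambda>xy. Jp p (U (fst xy) - U (snd xy)) * (\<phi> (fst xy) - \<phi> (snd xy)) / D xy)"
  define g where "g = (\<lambda>xy. \<bar>\<phi> (fst xy) - \<phi> (snd xy)\<bar> powr p / D xy)"
  define h where "h = (\<lambda>xy. \<bar>U (fst xy) - U (snd xy)\<bar> powr p / D xy)"
  have fgh: "g xy \<le> f xy \<and> f xy \<le> h xy" for xy
    using ptw_aux[OF p, of "\<phi> (fst xy) - \<phi> (snd xy)" "U (fst xy) - U (snd xy)"]
      phisign[of "fst xy" "snd xy"] phidiff[of "fst xy" "snd xy"] Dnn[of xy]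
    unfolding f_def g_def h_def by (auto intro: divide_right_mono)
  have g0: "0 \<le> g xy" for xy unfolding g_def using Dnn by simp
  have [measurable]: "(\<lambda>xy::'a\<times>'a. U (fst xy)) \<in> borel_measurable borel"
    "(\<lambda>xy::'a\<times>'a. U (snd xy)) \<in> borel_measurable borel"
    "(\<lambda>xy::'a\<times>'a. \<phi> (fst xy)) \<in> borel_measurable borel"
    "(\<lambda>xy::'a\<times>'a. \<phi> (snd xy)) \<in> borel_measurable borel"
    "(\<lambda>xy::'a\<times>'a. dist (fst xy) (snd xy)) \<in> borel_measurable borel"
    by (intro borel_measurable_continuous_onI continuous_intros continuous_on_compose2[OF Ucont]
        continuous_on_compose2[OF phicont]; simp)+
  have fm: "f \<in> borel_measurable lborel" unfolding f_def D_def Jp_def by simp measurable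
  have gm: "g \<in> borel_measurable lborel" unfolding g_def D_def by simp measurable
  have hm: "h \<in> borel_measurable lborel" unfolding h_def D_def by simp measurable
  have hint: "integrable lborel h"
  proof (rule integrableI_nonneg[OF hm])
    show "AE x in lborel. 0 \<le> h x" using Dnn by (simp add: h_def)
    show "(\<integral>\<^sup>+ x. ennreal (h x) \<partial>lborel) < \<infinity>"
      using Ugag unfolding gagliardo_p_def h_def D_def by simp
  qed
  have fint: "integrable lborel f"
    by (rule Bochner_Integration.integrable_bound[OF hint fm]) (rule AE_I2, use fgh g0 in \<open>smt (verit) real_norm_def\<close>)
  have "(\<integral>x. \<phi> x \<partial>M1) = 0"
    by (rule integral_eq_zero_AE) (use AE1 zero in \<open>auto simp: \<phi>_def\<close>)
  moreover have "(\<integral>x. \<phi> x \<partial>M2) = 0"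
    by (rule integral_eq_zero_AE) (use AE2 zero in \<open>auto simp: \<phi>_def\<close>)
  ultimately have I0: "(\<integral>xy. f xy \<partial>lborel) = 0"
    using EL phiW unfolding f_def D_def by simp
  have "(\<integral>\<^sup>+xy. ennreal (f xy) \<partial>lborel) = 0"
  proof -
    have "AE x in lborel. 0 \<le> f x" by (rule AE_I2) (use fgh g0 in \<open>meson order_trans\<close>)
    then show ?thesis using nn_integral_eq_integral[OF fint] I0 by simp
  qed
  moreover have "(\<integral>\<^sup>+xy. ennreal (g xy) \<partial>lborel) \<le> (\<integral>\<^sup>+xy. ennreal (f xy) \<partial>lborel)"
    by (intro nn_integral_mono ennreal_leI) (use fgh in auto)
  ultimately have G0: "(\<integral>\<^sup>+xy. ennreal (g xy) \<partial>lborel) = 0" by simp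
  obtain k where k: "k \<in> K" using Kne by auto
  have phik: "\<phi> k = 0" using zero[OF k] by (simp add: \<phi>_def)
  define c where "c = \<bar>\<phi> x0\<bar> / 3"
  have c: "c > 0" using nz by (simp add: c_def \<phi>_def)
  obtain r1 where r1: "r1 > 0" "\<And>y. dist y x0 < r1 \<Longrightarrow> dist (\<phi> y) (\<phi> x0) < c"
    using phicont c unfolding continuous_on_iff by blast
  obtain r2 where r2: "r2 > 0" "\<And>y. dist y k < r2 \<Longrightarrow> dist (\<phi> y) (\<phi> k) < c"
    using phicont c unfolding continuous_on_iff by blast
  define A where "A = ball x0 (min r1 1)"
  define B where "B = ball k (min r2 1)"
  define R where "R = dist x0 k + 2"
  define c' where "c' = c powr p / R powr (real DIM('a) + s * p)"
  have "R > 0" unfolding R_def by (simp add: add_nonneg_pos)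
  then have c'pos: "c' > 0" using c unfolding c'_def by (simp add: divide_pos_pos)
  have gA: "c' \<le> g (a, b)" if a: "a \<in> A" and b: "b \<in> B" for a b
  proof -
    have da1: "dist a x0 < 1" "dist a x0 < r1" using a by (auto simp: A_def dist_commute)
    have db1: "dist b k < 1" "dist b k < r2" using b by (auto simp: B_def dist_commute)
    have da2: "\<bar>\<phi> a - \<phi> x0\<bar> < c" using r1(2)[OF da1(2)] by (simp add: dist_real_def)
    have db2: "\<bar>\<phi> b\<bar> < c" using r2(2)[OF db1(2)] phik by (simp add: dist_real_def)
    have phidist: "c \<le> \<bar>\<phi> a - \<phi> b\<bar>"
      using da2 db2 c_def by argo
    then have "a \<noteq> b" using c by auto
    then have dpos: "0 < dist a b" by simp
    have t1: "dist a b \<le> dist a x0 + dist x0 b" by (rule dist_triangle)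
    have t2: "dist x0 b \<le> dist x0 k + dist k b" by (rule dist_triangle)
    have "dist k b = dist b k" by (rule dist_commute)
    then have dR: "dist a b \<le> R" using t1 t2 da1 db1 unfolding R_def by linarith
    have n1: "c powr p \<le> \<bar>\<phi> a - \<phi> b\<bar> powr p" using c phidist p by (intro powr_mono2) auto
    have n2: "dist a b powr (real DIM('a) + s * p) \<le> R powr (real DIM('a) + s * p)"
      using dR dpos p s0 by (intro powr_mono2) (auto intro: add_nonneg_nonneg)
    have n3: "0 < dist a b powr (real DIM('a) + s * p)" using dpos by simp
    have "c powr p / R powr (real DIM('a) + s * p) \<le>
          \<bar>\<phi> a - \<phi> b\<bar> powr p / dist a b powr (real DIM('a) + s * p)"
      by (rule frac_le[OF _ n1 n3 n2]) simp
    then show ?thesis unfolding c'_def g_def D_def by simp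
  qed
  have Aopen: "A \<in> sets lborel" "B \<in> sets lborel" by (auto simp: A_def B_def)
  have "ennreal c' * emeasure lborel (A \<times> B) = (\<integral>\<^sup>+xy. ennreal c' * indicator (A \<times> B) xy \<partial>lborel)"
    by (rule nn_integral_cmult_indicator[symmetric]) (use Aopen in \<open>auto simp: lborel_prod[symmetric]\<close>)
  also have "\<dots> \<le> (\<integral>\<^sup>+xy. ennreal (g xy) \<partial>lborel)"
    by (intro nn_integral_mono) (auto simp: indicator_def gA ennreal_leI)
  finally have "ennreal c' * emeasure lborel (A \<times> B) = 0" using G0 by simp
  moreover have "emeasure lborel (A \<times> B) = emeasure lborel A * emeasure lborel B"
    using lborel.emeasure_pair_measure_Times[OF Aopen] by (simp add: lborel_prod)
  moreover have "emeasure lborel A > 0" "emeasure lborel B > 0"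
    using r1 r2 by (auto simp: A_def B_def intro!: ball_pos)
  ultimately show False using c'pos by auto
qed

theorem proposition7p6:
  fixes s p :: real and U :: "'a::euclidean_space \<Rightarrow> real"
    and M1 M2 :: "'a measure" and K :: "'a set"
  assumes "1 < p" and "0 < s" and "s < 1" and "s * p > real DIM('a)"
    and "sets M1 = sets borel" and "sets M2 = sets borel"
    and "finite_measure M1" and "finite_measure M2"
    and "\<exists>P\<in>sets borel. emeasure M1 (UNIV - P) = 0 \<and> emeasure M2 P = 0"
    and "K = signed_support M1 M2"
    and "compact K" and "K \<noteq> {}"
    and "U \<in> Wsp s p"
    and "\<forall>\<phi>\<in>Wsp s p.
           (\<integral>xy. Jp p (U (fst xy) - U (snd xy)) * (\<phi> (fst xy) - \<phi> (snd xy)) /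
                  dist (fst xy) (snd xy) powr (real DIM('a) + s * p) \<partial>(lborel :: ('a \<times> 'a) measure))
           = (\<integral>x. \<phi> x \<partial>M1) - (\<integral>x. \<phi> x \<partial>M2)"
  shows "esssup lborel (\<lambda>x. ereal \<bar>U x\<bar>) < \<infinity> \<and>
         (\<forall>z. \<exists>x0\<in>K. (\<forall>x\<in>K. \<bar>U x - U z\<bar> \<le> \<bar>U x0 - U z\<bar>) \<and>
              esssup lborel (\<lambda>x. ereal \<bar>U x - U z\<bar>) = ereal \<bar>U x0 - U z\<bar>)"
proof -
  have Ucont: "continuous_on UNIV U" using assms(13) by (simp add: Wsp_def)
  have AE1: "AE x in M1. x \<in> K" using support_AE[OF assms(5), of M2] assms(10) by simp
  have "signed_support M2 M1 = signed_support M1 M2"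
    by (simp add: signed_support_def add.commute)
  then have AE2: "AE x in M2. x \<in> K" using support_AE[OF assms(6), of M1] assms(10) by simp
  have UK: "continuous_on K U" using Ucont by (rule continuous_on_subset) simp
  obtain kM where kM: "kM \<in> K" "\<And>y. y \<in> K \<Longrightarrow> U y \<le> U kM"
    using continuous_attains_sup[OF assms(11) assms(12) UK] by blast
  obtain km where km: "km \<in> K" "\<And>y. y \<in> K \<Longrightarrow> U km \<le> U y"
    using continuous_attains_inf[OF assms(11) assms(12) UK] by blast
  have up: "U x \<le> U kM" for x
  proof -
    have "max (U x - U kM) 0 = 0"
    proof (rule key[where \<psi>="\<lambda>t. max (t - U kM) 0", OF assms(1) assms(2) assms(13) assms(14) AE1 AE2 assms(12)])
      show "mono (\<lambda>t. max (t - U kM) 0)" by (rule monoI) simp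
      show "\<bar>max (a - U kM) 0 - max (b - U kM) 0\<bar> \<le> \<bar>a - b\<bar>" for a b
        by (simp add: max_def abs_if)
      show "max (U k - U kM) 0 = 0" if "k \<in> K" for k using kM(2)[OF that] by simp
    qed
    then show ?thesis by simp
  qed
  have lo: "U km \<le> U x" for x
  proof -
    have "min (U x - U km) 0 = 0"
    proof (rule key[where \<psi>="\<lambda>t. min (t - U km) 0", OF assms(1) assms(2) assms(13) assms(14) AE1 AE2 assms(12)])
      show "mono (\<lambda>t. min (t - U km) 0)" by (rule monoI) simp
      show "\<bar>min (a - U km) 0 - min (b - U km) 0\<bar> \<le> \<bar>a - b\<bar>" for a b
        by (simp add: min_def abs_if)
      show "min (U k - U km) 0 = 0" if "k \<in> K" for k using km(2)[OF that] by simp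
    qed
    then show ?thesis by simp
  qed
  have Umeas[measurable]: "U \<in> borel_measurable borel"
    by (rule borel_measurable_continuous_onI[OF Ucont])
  have part1: "esssup lborel (\<lambda>x. ereal \<bar>U x\<bar>) < \<infinity>"
  proof -
    have "esssup lborel (\<lambda>x. ereal \<bar>U x\<bar>) \<le> ereal (max \<bar>U kM\<bar> \<bar>U km\<bar>)"
    proof (rule esssup_I)
      show "(\<lambda>x. ereal \<bar>U x\<bar>) \<in> borel_measurable lborel" by simp
      show "AE x in lborel. ereal \<bar>U x\<bar> \<le> ereal (max \<bar>U kM\<bar> \<bar>U km\<bar>)"
      proof (rule AE_I2)
        fix x
        have "U x \<le> max \<bar>U kM\<bar> \<bar>U km\<bar>"
          using up[of x] by (meson abs_ge_self max.coboundedI1 order_trans)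
        moreover have "- U x \<le> max \<bar>U kM\<bar> \<bar>U km\<bar>"
          using lo[of x] by (meson abs_ge_minus_self max.coboundedI2 order_trans neg_le_iff_le)
        ultimately have "\<bar>U x\<bar> \<le> max \<bar>U kM\<bar> \<bar>U km\<bar>" by (simp only: abs_le_iff)
        then show "ereal \<bar>U x\<bar> \<le> ereal (max \<bar>U kM\<bar> \<bar>U km\<bar>)" by (simp only: ereal_less_eq)
      qed
    qed
    then show ?thesis by (rule order.strict_trans1) (simp add: max_def)
  qed
  have part2: "\<exists>x0\<in>K. (\<forall>x\<in>K. \<bar>U x - U z\<bar> \<le> \<bar>U x0 - U z\<bar>) \<and>
              esssup lborel (\<lambda>x. ereal \<bar>U x - U z\<bar>) = ereal \<bar>U x0 - U z\<bar>" for z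
  proof -
    define f where "f = (\<lambda>x. \<bar>U x - U z\<bar>)"
    have fcont: "continuous_on UNIV f" unfolding f_def by (intro continuous_intros Ucont)
    obtain x0 where x0: "x0 \<in> K" "\<And>y. y \<in> K \<Longrightarrow> f y \<le> f x0"
      using continuous_attains_sup[OF assms(11) assms(12) continuous_on_subset[OF fcont]] by blast
    have fm: "(\<lambda>x. ereal (f x)) \<in> borel_measurable lborel" unfolding f_def by simp
    have bnd: "f x \<le> f x0" for x
    proof -
      have "f kM \<le> f x0" "f km \<le> f x0" using x0(2) kM(1) km(1) by auto
      then show ?thesis using up[of x] lo[of x] unfolding f_def by (simp add: abs_le_iff)
    qed
    have le: "esssup lborel (\<lambda>x. ereal (f x)) \<le> ereal (f x0)"
      by (rule esssup_I[OF fm]) (rule AE_I2, simp add: bnd)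
    have ge: "ereal (f x0) \<le> esssup lborel (\<lambda>x. ereal (f x))"
    proof (rule ccontr)
      assume "\<not> ereal (f x0) \<le> esssup lborel (\<lambda>x. ereal (f x))"
      then have lt: "esssup lborel (\<lambda>x. ereal (f x)) < ereal (f x0)" by simp
      obtain c where c: "esssup lborel (\<lambda>x. ereal (f x)) < ereal c" "ereal c < ereal (f x0)"
        using ereal_dense2[OF lt] by blast
      then have cx: "c < f x0" by simp
      obtain r where r: "r > 0" "\<And>y. dist y x0 < r \<Longrightarrow> dist (f y) (f x0) < f x0 - c"
        using fcont cx unfolding continuous_on_iff by (metis UNIV_I diff_gt_0_iff_gt)
      have "AE x in lborel. x \<notin> ball x0 r"
        using esssup_AE[of "\<lambda>x. ereal (f x)" lborel]
      proof (rule AE_mp, intro AE_I2 impI)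
        fix x assume A: "ereal (f x) \<le> esssup lborel (\<lambda>x. ereal (f x))"
        show "x \<notin> ball x0 r"
        proof
          assume "x \<in> ball x0 r"
          then have "dist x x0 < r" by (simp add: dist_commute)
          then have "dist (f x) (f x0) < f x0 - c" using r(2) by blast
          then have "c < f x" by (simp add: dist_real_def)
          moreover have "ereal (f x) < ereal c" using A c(1) by (rule le_less_trans)
          ultimately show False by simp
        qed
      qed
      then have "ball x0 r \<in> null_sets lborel" by (subst AE_iff_null_sets) auto
      then show False using ball_pos[OF r(1), of x0] by auto
    qed
    show ?thesis using x0 le ge unfolding f_def by (intro bexI[of _ x0]) auto
  qed
  show ?thesis using part1 part2 by blast
qed

end
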